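(* For $n\ge1$ choose uniformly at random one of the $\binom{3n}{n,n,n}$ lattice paths from $(n,n,n)$ to $(0,0,0)$ with steps $(-1,0,0),(0,-1,0),(0,0,-1)$, and let $X_n$ be the integer $k$ such that the first visit of the path to the diagonal $\{x=y=z\}$ after the start is at $(k,k,k)$. Then $$\mathbb{P}(X_n=k)=\frac{a_{n-k,1}\binom{3k}{k,k,k}}{\binom{3n}{n,n,n}},\qquad0\le k\le n-1,$$ where $a_{m,1}$ is the number of such paths from $(m,m,m)$ to the origin not visiting the diagonal strictly between start and end ($a_{0,1}=0$). Moreover $n-X_n$ converges in distribution to a random variable $X$ with $\mathbb{P}(X=\ell)=a_{\ell,1}/3^{3\ell}$, $\ell\ge0$. *)

theory Defs
  imports "HOL-Probability.Probability"
begin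

text \<open>A lattice path from (n,n,n) to (0,0,0) is encoded as the list of its steps:
  step 0 = (-1,0,0), step 1 = (0,-1,0), step 2 = (0,0,-1).\<close>

definition lattice_paths :: "nat \<Rightarrow> nat list set" where
  "lattice_paths n = {p. set p \<subseteq> {0,1,2} \<and> count_list p 0 = n \<and>
                         count_list p 1 = n \<and> count_list p 2 = n}"

definition pos :: "nat \<Rightarrow> nat list \<Rightarrow> nat \<Rightarrow> nat \<times> nat \<times> nat" where
  "pos n p i = (n - count_list (take i p) 0, n - count_list (take i p) 1,
                n - count_list (take i p) 2)"

definition on_diag :: "nat \<times> nat \<times> nat \<Rightarrow> bool" where
  "on_diag q \<longleftrightarrow> (case q of (x, y, z) \<Rightarrow> x = y \<and> y = z)"

definition first_visit_time :: "nat \<Rightarrow> nat list \<Rightarrow> nat" where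
  "first_visit_time n p = (LEAST i. 0 < i \<and> on_diag (pos n p i))"

definition first_visit :: "nat \<Rightarrow> nat list \<Rightarrow> nat" where
  "first_visit n p = fst (pos n p (first_visit_time n p))"

text \<open>a_{m,1}: paths from (m,m,m) to the origin not visiting the diagonal strictly
  between start and end; the condition p \<noteq> [] enforces the convention a_{0,1} = 0.\<close>
definition a1 :: "nat \<Rightarrow> nat" where
  "a1 m = card {p \<in> lattice_paths m. p \<noteq> [] \<and>
                  (\<forall>i. 0 < i \<and> i < length p \<longrightarrow> \<not> on_diag (pos m p i))}"

definition multinom3 :: "nat \<Rightarrow> real" where
  "multinom3 n = fact (3 * n) / (fact n) ^ 3"

definition X_dist :: "nat \<Rightarrow> nat pmf" where
  "X_dist n = map_pmf (first_visit n) (pmf_of_set (lattice_paths n))"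

end

theory Submission
  imports Defs "HOL-Combinatorics.Multiset_Permutations" "HOL-Real_Asymp.Real_Asymp"
begin


definition D :: "nat list \<Rightarrow> nat \<Rightarrow> bool" where
  "D p i \<longleftrightarrow> count_list (take i p) 0 = count_list (take i p) 1 \<and>
              count_list (take i p) 1 = count_list (take i p) 2"

lemma len3: "set xs \<subseteq> {0,1,2} \<Longrightarrow>
  length xs = count_list xs 0 + count_list xs 1 + count_list xs (2::nat)"
  by (induction xs) auto

lemma count_take_le: "count_list (take i p) c \<le> count_list p c"
  by (metis append_take_drop_id count_list_append le_add1)

lemma LP_set: "p \<in> lattice_paths n \<Longrightarrow> set p \<subseteq> {0,1,2}"
  by (simp add: lattice_paths_def)

lemma LP_len: "p \<in> lattice_paths n \<Longrightarrow> length p = 3 * n"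
  using len3[of p] by (simp add: lattice_paths_def)

lemma diag_iff: "p \<in> lattice_paths n \<Longrightarrow> on_diag (pos n p i) \<longleftrightarrow> D p i"
  using count_take_le[of i p 0] count_take_le[of i p 1] count_take_le[of i p 2]
  by (auto simp: lattice_paths_def on_diag_def pos_def D_def)

definition MS :: "nat \<Rightarrow> nat multiset" where
  "MS n = replicate_mset n 0 + replicate_mset n 1 + replicate_mset n 2"

lemma LP_perm: "lattice_paths n = permutations_of_multiset (MS n)"
proof (intro set_eqI iffI)
  fix p assume p: "p \<in> lattice_paths n"
  have "mset p = MS n"
  proof (rule multiset_eqI)
    fix x
    show "count (mset p) x = count (MS n) x"
      using p by (cases "x = 0 \<or> x = 1 \<or> x = 2")
        (auto simp: count_mset lattice_paths_def MS_def count_list_0_iff)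
  qed
  then show "p \<in> permutations_of_multiset (MS n)" by (simp add: permutations_of_multiset_def)
next
  fix p assume "p \<in> permutations_of_multiset (MS n)"
  then have m: "mset p = MS n" by (simp add: permutations_of_multiset_def)
  have "set p = set_mset (MS n)" using m by (metis set_mset_mset)
  moreover have "set_mset (MS n) \<subseteq> {0,1,2}" by (auto simp: MS_def)
  moreover have "count_list p c = count (MS n) c" for c using m by (metis count_mset)
  ultimately show "p \<in> lattice_paths n" by (auto simp: lattice_paths_def MS_def)
qed

lemma finite_LP: "finite (lattice_paths n)"
  by (simp add: LP_perm)

lemma card_LP_nat: "card (lattice_paths n) * fact n ^ 3 = fact (3 * n)"
proof -
  have "card (lattice_paths n) * (\<Prod>x\<in>set_mset (MS n). fact (count (MS n) x)) = fact (size (MS n))"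
    unfolding LP_perm by (rule card_permutations_of_multiset_aux)
  moreover have "(\<Prod>x\<in>set_mset (MS n). fact (count (MS n) x)) = (fact n ^ 3 :: nat)"
  proof (cases "n = 0")
    case True then show ?thesis by (simp add: MS_def)
  next
    case False
    then have "set_mset (MS n) = {0,1,2}" by (auto simp: MS_def)
    moreover have "count (MS n) 0 = n" "count (MS n) 1 = n" "count (MS n) 2 = n"
      by (auto simp: MS_def)
    ultimately show ?thesis by (simp add: power3_eq_cube)
  qed
  moreover have "size (MS n) = 3 * n" by (simp add: MS_def)
  ultimately show ?thesis by simp
qed

lemma card_LP: "real (card (lattice_paths n)) = multinom3 n"
proof -
  have "real (card (lattice_paths n)) * fact n ^ 3 = fact (3 * n)"
    by (metis card_LP_nat of_nat_fact of_nat_mult of_nat_power)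
  moreover have "(fact n :: real) ^ 3 > 0" by simp
  ultimately show ?thesis unfolding multinom3_def by (simp add: field_simps)
qed

lemma card_LP_pos: "card (lattice_paths n) > 0"
  using card_LP_nat[of n] by (metis fact_nonzero mult_is_0 neq0_conv)

lemma take_full: "p \<in> lattice_paths n \<Longrightarrow> take (3*n) p = p"
  using LP_len by simp

lemma D_full: "p \<in> lattice_paths n \<Longrightarrow> D p (3*n)"
  using take_full[of p n] by (simp add: D_def lattice_paths_def)

lemma fvt:
  assumes p: "p \<in> lattice_paths n" and n: "1 \<le> n"
  defines "t \<equiv> first_visit_time n p"
  shows "0 < t" "t \<le> 3*n" "D p t" "\<And>i. 0 < i \<Longrightarrow> i < t \<Longrightarrow> \<not> D p i"
proof -
  have ex: "0 < 3*n \<and> on_diag (pos n p (3*n))" using n D_full[OF p] diag_iff[OF p] by simp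
  have "0 < t \<and> on_diag (pos n p t)" unfolding t_def first_visit_time_def by (rule LeastI, rule ex)
  then show "0 < t" "D p t" using diag_iff[OF p] by auto
  show "t \<le> 3*n" unfolding t_def first_visit_time_def by (rule Least_le, rule ex)
  fix i assume "0 < i" "i < t"
  then show "\<not> D p i" using not_less_Least[of i "\<lambda>i. 0 < i \<and> on_diag (pos n p i)"]
    diag_iff[OF p] unfolding t_def first_visit_time_def by auto
qed

lemma fv_count:
  assumes p: "p \<in> lattice_paths n" and n: "1 \<le> n"
  shows "first_visit_time n p = 3 * count_list (take (first_visit_time n p) p) 0"
    "first_visit n p = n - count_list (take (first_visit_time n p) p) 0"
    "count_list (take (first_visit_time n p) p) 0 \<le> n"
proof -
  define t where "t = first_visit_time n p"
  have l: "length (take t p) = t" using fvt(2)[OF p n] LP_len[OF p] unfolding t_def by simp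
  have s: "set (take t p) \<subseteq> {0,1,2}" using LP_set[OF p] set_take_subset by (meson subset_trans)
  have d: "D p t" using fvt(3)[OF p n] unfolding t_def .
  have "t = 3 * count_list (take t p) 0"
    using len3[OF s] l d unfolding D_def by linarith
  then show "first_visit_time n p = 3 * count_list (take (first_visit_time n p) p) 0"
    unfolding t_def .
  show "first_visit n p = n - count_list (take (first_visit_time n p) p) 0"
    unfolding first_visit_def pos_def by simp
  show "count_list (take (first_visit_time n p) p) 0 \<le> n"
    using count_take_le[of "first_visit_time n p" p 0] p
    by (simp add: lattice_paths_def)
qed

lemma fv_lt: "p \<in> lattice_paths n \<Longrightarrow> 1 \<le> n \<Longrightarrow> first_visit n p < n"
proof -
  assume p: "p \<in> lattice_paths n" and n: "1 \<le> n"
  define t where "t = first_visit_time n p"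
  have "0 < t" using fvt(1)[OF p n] unfolding t_def .
  then have "0 < count_list (take t p) 0" using fv_count(1)[OF p n] unfolding t_def
    by (metis gr0I mult_0_right)
  then show ?thesis using fv_count(2)[OF p n] n unfolding t_def by simp
qed

definition AA :: "nat \<Rightarrow> nat list set" where
  "AA m = {p \<in> lattice_paths m. p \<noteq> [] \<and>
                  (\<forall>i. 0 < i \<and> i < length p \<longrightarrow> \<not> on_diag (pos m p i))}"

lemma a1_AA: "a1 m = card (AA m)" by (simp add: a1_def AA_def)

lemma split_set:
  assumes k: "k < n"
  shows "{p \<in> lattice_paths n. first_visit n p = k} = (\<lambda>(q,r). q @ r) ` (AA (n-k) \<times> lattice_paths k)"
proof (intro set_eqI iffI)
  fix p assume "p \<in> {p \<in> lattice_paths n. first_visit n p = k}"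
  then have p: "p \<in> lattice_paths n" and fk: "first_visit n p = k" by auto
  have n: "1 \<le> n" using k by simp
  define t where "t = first_visit_time n p"
  define m where "m = n - k"
  have c: "count_list (take t p) 0 = m" using fv_count[OF p n] fk unfolding t_def m_def by linarith
  have t: "t = 3*m" using fv_count(1)[OF p n] c unfolding t_def by simp
  have Dt: "D p t" using fvt(3)[OF p n] unfolding t_def .
  have q: "take t p \<in> AA m"
  proof -
    have "take t p \<in> lattice_paths m"
      using c Dt LP_set[OF p] set_take_subset[of t p] unfolding lattice_paths_def D_def by auto
    moreover have "take t p \<noteq> []"
    proof -
      have "length (take t p) = t" using fvt(2)[OF p n] LP_len[OF p] unfolding t_def by simp
      then show ?thesis using fvt(1)[OF p n] unfolding t_def by auto
    qed
    moreover have "\<not> on_diag (pos m (take t p) i)" if "0 < i" "i < length (take t p)" for i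
    proof -
      have "\<not> D p i" using fvt(4)[OF p n, of i] that unfolding t_def by simp
      moreover have "take i (take t p) = take i p" using that by simp
      ultimately have "\<not> D (take t p) i" unfolding D_def by simp
      then show ?thesis using diag_iff[OF \<open>take t p \<in> lattice_paths m\<close>] by simp
    qed
    ultimately show ?thesis unfolding AA_def by auto
  qed
  have r: "drop t p \<in> lattice_paths k"
  proof -
    have "count_list (drop t p) x = count_list p x - count_list (take t p) x" for x
      by (metis append_take_drop_id count_list_append diff_add_inverse)
    then show ?thesis using q p set_drop_subset[of t p] k
      unfolding AA_def lattice_paths_def m_def by auto
  qed
  show "p \<in> (\<lambda>(q,r). q @ r) ` (AA (n-k) \<times> lattice_paths k)"
    using q r unfolding m_def by (intro image_eqI[of _ _ "(take t p, drop t p)"]) auto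
next
  fix p assume "p \<in> (\<lambda>(q,r). q @ r) ` (AA (n-k) \<times> lattice_paths k)"
  then obtain q r where q: "q \<in> AA (n-k)" and r: "r \<in> lattice_paths k" and pe: "p = q @ r" by auto
  define m where "m = n - k"
  have qL: "q \<in> lattice_paths m" using q unfolding AA_def m_def by simp
  have lq: "length q = 3*m" using LP_len[OF qL] .
  have m: "1 \<le> m" using k unfolding m_def by simp
  have p: "p \<in> lattice_paths n" using qL r k unfolding pe lattice_paths_def m_def by auto
  have n: "1 \<le> n" using k by simp
  have ft: "first_visit_time n p = 3*m"
    unfolding first_visit_time_def
  proof (rule Least_equality)
    have "D p (3*m)" using D_full[OF qL] lq unfolding pe D_def by simp
    then show "0 < 3*m \<and> on_diag (pos n p (3*m))" using m diag_iff[OF p] by simp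
  next
    fix y assume y: "0 < y \<and> on_diag (pos n p y)"
    show "3*m \<le> y"
    proof (rule ccontr)
      assume "\<not> 3*m \<le> y"
      then have yl: "y < length q" using lq by simp
      have "D p y" using y diag_iff[OF p] by simp
      then have "D q y" using yl unfolding pe D_def by simp
      then have "on_diag (pos m q y)" using diag_iff[OF qL] by simp
      then show False using q y yl unfolding AA_def m_def by auto
    qed
  qed
  have "first_visit n p = n - count_list (take (3*m) p) 0"
    unfolding first_visit_def pos_def ft by simp
  also have "take (3*m) p = q" using lq unfolding pe by simp
  also have "count_list q 0 = m" using qL unfolding lattice_paths_def by simp
  finally show "p \<in> {p \<in> lattice_paths n. first_visit n p = k}" using p k unfolding m_def by simp
qed

lemma card_split:
  assumes k: "k < n"
  shows "card {p \<in> lattice_paths n. first_visit n p = k} = a1 (n-k) * card (lattice_paths k)"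
proof -
  have inj: "inj_on (\<lambda>(q,r). q @ r) (AA (n-k) \<times> lattice_paths k)"
  proof (rule inj_onI, clarify)
    fix q r q' r' assume "q \<in> AA (n-k)" "q' \<in> AA (n-k)" and e: "q @ r = q' @ r'"
    then have "length q = length q'" using LP_len unfolding AA_def by auto
    then show "q = q' \<and> r = r'" using e by simp
  qed
  have fin: "finite (AA (n-k))" unfolding AA_def using finite_LP by simp
  show ?thesis unfolding split_set[OF k] a1_AA card_image[OF inj]
    by (simp add: card_cartesian_product)
qed



lemma a1_0: "a1 0 = 0"
proof -
  have "AA 0 = {}" unfolding AA_def using LP_len[of _ 0] by auto
  then show ?thesis by (simp add: a1_AA)
qed

lemma multinom3_pos: "multinom3 n > 0"
  unfolding multinom3_def by simp

lemma multinom3_0: "multinom3 0 = 1"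
  unfolding multinom3_def by simp

lemma multinom3_Suc:
  "multinom3 (Suc n) = multinom3 n * ((3*real n+3)*(3*real n+2)*(3*real n+1) / (real n+1)^3)"
proof -
  have e: "3 * Suc n = Suc (Suc (Suc (3*n)))" by simp
  have "(fact (3 * Suc n) :: real) = ((3*real n+3)*(3*real n+2)*(3*real n+1)) * fact (3*n)"
    unfolding e by (simp add: algebra_simps)
  moreover have "(fact (Suc n) :: real) ^ 3 = (real n+1)^3 * (fact n :: real) ^ 3"
  proof -
    have "(fact (Suc n) :: real) = (real n + 1) * fact n" by simp
    then show ?thesis by (simp only: power_mult_distrib)
  qed
  ultimately show ?thesis unfolding multinom3_def by (simp add: field_simps)
qed

lemma multinom3_Suc2:
  "multinom3 (Suc n) = multinom3 n * (3*(3*real n+2)*(3*real n+1) / (real n+1)^2)"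
proof -
  have h: "real n + 1 > 0" by simp
  have "(3*real n+3)*(3*real n+2)*(3*real n+1) / (real n+1)^3
      = ((real n + 1) * (3*(3*real n+2)*(3*real n+1))) / ((real n+1) * (real n+1)^2)"
    by (simp add: algebra_simps power2_eq_square power3_eq_cube)
  also have "\<dots> = 3*(3*real n+2)*(3*real n+1) / (real n+1)^2"
    using h by (subst mult_divide_mult_cancel_left) auto
  finally show ?thesis unfolding multinom3_Suc by simp
qed

lemma prob_formula:
  assumes "1 \<le> n" "k \<le> n - 1"
  shows "measure_pmf.prob (pmf_of_set (lattice_paths n)) {p. first_visit n p = k}
              = real (a1 (n - k)) * multinom3 k / multinom3 n"
proof -
  have k: "k < n" using assms by simp
  have ne: "lattice_paths n \<noteq> {}" using card_LP_pos[of n] by auto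
  have "measure_pmf.prob (pmf_of_set (lattice_paths n)) {p. first_visit n p = k}
     = card (lattice_paths n \<inter> {p. first_visit n p = k}) / card (lattice_paths n)"
    by (rule measure_pmf_of_set[OF ne finite_LP])
  also have "lattice_paths n \<inter> {p. first_visit n p = k} = {p \<in> lattice_paths n. first_visit n p = k}"
    by auto
  also have "real (card \<dots>) = real (a1 (n-k)) * multinom3 k"
    unfolding card_split[OF k] by (simp add: card_LP)
  finally show ?thesis by (simp add: card_LP)
qed

lemma renewal_nat:
  assumes n: "1 \<le> n"
  shows "multinom3 n = (\<Sum>k<n. real (a1 (n-k)) * multinom3 k)"
proof -
  have U: "lattice_paths n = (\<Union>k\<in>{..<n}. {p \<in> lattice_paths n. first_visit n p = k})"
    using fv_lt[OF _ n] by auto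
  have "card (\<Union>k\<in>{..<n}. {p \<in> lattice_paths n. first_visit n p = k})
        = (\<Sum>k<n. card {p \<in> lattice_paths n. first_visit n p = k})"
    by (rule card_UN_disjoint) (auto simp: finite_LP)
  then have "card (lattice_paths n) = (\<Sum>k<n. card {p \<in> lattice_paths n. first_visit n p = k})"
    using arg_cong[OF U, of card] by simp
  also have "\<dots> = (\<Sum>k<n. a1 (n-k) * card (lattice_paths k))"
    by (intro sum.cong refl card_split) auto
  finally have "real (card (lattice_paths n)) = real (\<Sum>k<n. a1 (n-k) * card (lattice_paths k))"
    by (rule arg_cong)
  also have "\<dots> = (\<Sum>k<n. real (a1 (n-k)) * real (card (lattice_paths k)))"
    by (simp only: of_nat_sum of_nat_mult)
  finally show ?thesis by (simp add: card_LP)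
qed

definition al :: "nat \<Rightarrow> real" where "al l = real (a1 l) / 27 ^ l"
definition bb :: "nat \<Rightarrow> real" where "bb n = multinom3 n / 27 ^ n"

lemma al_nonneg: "al l \<ge> 0" by (simp add: al_def)
lemma bb_nonneg: "bb l \<ge> 0" using multinom3_pos[of l] by (simp add: bb_def)
lemma al_0: "al 0 = 0" by (simp add: al_def a1_0)
lemma bb_0: "bb 0 = 1" by (simp add: bb_def multinom3_0)

lemma renewal:
  assumes n: "1 \<le> n"
  shows "bb n = (\<Sum>k<n. al (n-k) * bb k)"
proof -
  have "bb n = (\<Sum>k<n. real (a1 (n-k)) * multinom3 k) / 27^n"
    unfolding bb_def using renewal_nat[OF n] by simp
  also have "\<dots> = (\<Sum>k<n. real (a1 (n-k)) * multinom3 k / 27^n)"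
    by (simp add: sum_divide_distrib)
  also have "\<dots> = (\<Sum>k<n. al (n-k) * bb k)"
  proof (intro sum.cong refl)
    fix k assume "k \<in> {..<n}"
    then have "(27::real)^n = 27^(n-k) * 27^k" by (simp add: power_add[symmetric])
    then show "real (a1 (n-k)) * multinom3 k / 27^n = al (n-k) * bb k"
      by (simp add: al_def bb_def)
  qed
  finally show ?thesis .
qed

lemma bb_lower: "1 \<le> n \<Longrightarrow> bb n \<ge> 2 / 9 * inverse (real n)"
proof (induction n rule: dec_induct)
  case base
  then show ?case by (simp add: bb_def multinom3_def fact_numeral)
next
  case (step n)
  have s: "bb (Suc n) = bb n * ((3*real n+2)*(3*real n+1) / (9*(real n+1)^2))"
  proof -
    have g: "a * (3 * X / c) / (27 * t) = a / t * (X / (9 * c))" if "c \<noteq> 0" "t \<noteq> 0"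
      for a X c t :: real using that by (simp add: field_simps)
    have "bb (Suc n) = multinom3 n * (3 * ((3*real n+2)*(3*real n+1)) / (real n+1)^2) / (27 * 27^n)"
      unfolding bb_def multinom3_Suc2 power_Suc by (simp only: mult.assoc)
    also have "\<dots> = bb n * ((3*real n+2)*(3*real n+1) / (9*(real n+1)^2))"
      unfolding bb_def by (rule g) auto
    finally show ?thesis .
  qed
  have "real n * bb n \<le> (real n + 1) * bb (Suc n)"
  proof -
    have eq: "(real n + 1) * bb (Suc n) = bb n * ((3*real n+2)*(3*real n+1) / (9*(real n+1)))"
      unfolding s by (simp add: power2_eq_square)
    have le: "real n \<le> (3*real n+2)*(3*real n+1) / (9*(real n+1))"
      by (simp add: field_simps algebra_simps)
    have "bb n * real n \<le> bb n * ((3*real n+2)*(3*real n+1) / (9*(real n+1)))"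
      by (rule mult_left_mono[OF le bb_nonneg])
    moreover have "real n * bb n = bb n * real n" by (rule mult.commute)
    ultimately show ?thesis using eq by linarith
  qed
  moreover have "2/9 \<le> real n * bb n" using step.IH step.hyps by (simp add: field_simps)
  ultimately have "2/9 \<le> (real n + 1) * bb (Suc n)" by linarith
  then show ?case by (simp add: field_simps)
qed

lemma bb_not_summable: "\<not> summable bb"
proof
  assume "summable bb"
  then have "summable (\<lambda>n. 2/9 * inverse (real n))"
    by (rule summable_comparison_test'[where N=1]) (use bb_lower in auto)
  then have "summable (\<lambda>n. 9/2 * (2/9 * inverse (real n)))" by (rule summable_mult)
  then have "summable (\<lambda>n. inverse (real n))" by simp
  then show False using not_summable_harmonic by blast
qed

lemma ratio_lim: "(\<lambda>n. multinom3 n / multinom3 (Suc n)) \<longlonglongrightarrow> 1/27"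
proof -
  have e: "multinom3 n / multinom3 (Suc n) = (real n+1)^2 / (3*(3*real n+2)*(3*real n+1))" for n
  proof -
    have g: "a / (a * (3 * Y * Z / c)) = c / (3 * Y * Z)" if "a \<noteq> 0" "Y \<noteq> 0" "Z \<noteq> 0" "c \<noteq> 0"
      for a Y Z c :: real using that by (simp add: field_simps)
    show ?thesis unfolding multinom3_Suc2 by (rule g) (use multinom3_pos[of n] in auto)
  qed
  have "(\<lambda>n. (real n+1)^2 / (3*(3*real n+2)*(3*real n+1))) \<longlonglongrightarrow> 1/27"
    by real_asymp
  then show ?thesis unfolding e .
qed

lemma ratio_lim_l: "(\<lambda>n. multinom3 n / multinom3 (n + l)) \<longlonglongrightarrow> 1/27^l"
proof (induction l)
  case 0
  then show ?case using multinom3_pos by (simp add: less_le)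
next
  case (Suc l)
  have "(\<lambda>n. multinom3 (n+l) / multinom3 (Suc (n+l))) \<longlonglongrightarrow> 1/27"
    using LIMSEQ_ignore_initial_segment[OF ratio_lim, of l] by simp
  from tendsto_mult[OF Suc.IH this]
  have L: "(\<lambda>n. multinom3 n / multinom3 (n + l) * (multinom3 (n+l) / multinom3 (Suc (n+l))))
        \<longlonglongrightarrow> 1/27^l * (1/27)" .
  have E:  "multinom3 n / multinom3 (n + l) * (multinom3 (n+l) / multinom3 (Suc (n+l)))
     = multinom3 n / multinom3 (n + Suc l)" for n
  proof -
    have g: "a / b * (b / c) = a / c" if "b \<noteq> 0" for a b c :: real using that by simp
    show ?thesis using g[of "multinom3 (n+l)" "multinom3 n" "multinom3 (Suc (n+l))"] multinom3_pos[of "n+l"]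
      by simp
  qed
  have c: "1/27^l * (1/27) = (1/27^Suc l :: real)" by simp
  have E2: "(\<lambda>n. multinom3 n / multinom3 (n + l) * (multinom3 (n+l) / multinom3 (Suc (n+l))))
     = (\<lambda>n. multinom3 n / multinom3 (n + Suc l))" by (rule ext) (rule E)
  show ?case using L unfolding E2 c .
qed


definition Y :: "nat \<Rightarrow> nat pmf" where
  "Y n = map_pmf (\<lambda>p. Suc n - first_visit (Suc n) p) (pmf_of_set (lattice_paths (Suc n)))"

lemma pmf_Y:
  assumes l: "l \<le> Suc n"
  shows "pmf (Y n) l = real (a1 l) * multinom3 (Suc n - l) / multinom3 (Suc n)"
proof -
  have ne: "lattice_paths (Suc n) \<noteq> {}" using card_LP_pos[of "Suc n"] by auto
  have "pmf (Y n) l = measure_pmf.prob (pmf_of_set (lattice_paths (Suc n)))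
                        ((\<lambda>p. Suc n - first_visit (Suc n) p) -` {l})"
    unfolding Y_def by (simp add: pmf_map)
  also have "\<dots> = card (lattice_paths (Suc n) \<inter> ((\<lambda>p. Suc n - first_visit (Suc n) p) -` {l}))
                    / card (lattice_paths (Suc n))"
    by (rule measure_pmf_of_set[OF ne finite_LP])
  also have "\<dots> = real (a1 l) * multinom3 (Suc n - l) / multinom3 (Suc n)"
  proof (cases "l = 0")
    case True
    have "lattice_paths (Suc n) \<inter> ((\<lambda>p. Suc n - first_visit (Suc n) p) -` {l}) = {}"
      using fv_lt[of _ "Suc n"] True by fastforce
    then show ?thesis using True a1_0 by simp
  next
    case False
    have "lattice_paths (Suc n) \<inter> ((\<lambda>p. Suc n - first_visit (Suc n) p) -` {l})
          = {p \<in> lattice_paths (Suc n). first_visit (Suc n) p = Suc n - l}"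
      using fv_lt[of _ "Suc n"] False l by fastforce
    moreover have "Suc n - l < Suc n" "Suc n - (Suc n - l) = l" using False l by auto
    ultimately show ?thesis using card_split[of "Suc n - l" "Suc n"] by (simp add: card_LP)
  qed
  finally show ?thesis .
qed

lemma pmf_Y_lim: "(\<lambda>n. pmf (Y n) l) \<longlonglongrightarrow> al l"
proof (rule LIMSEQ_offset[where k=l])
  have e: "pmf (Y (n + l)) l = real (a1 l) * (multinom3 (Suc n) / multinom3 (Suc n + l))" for n
    using pmf_Y[of l "n+l"] by simp
  have "(\<lambda>n. multinom3 (Suc n) / multinom3 (Suc n + l)) \<longlonglongrightarrow> 1/27^l"
    using LIMSEQ_Suc[OF ratio_lim_l[of l]] by simp
  then have "(\<lambda>n. real (a1 l) * (multinom3 (Suc n) / multinom3 (Suc n + l))) \<longlonglongrightarrow> real (a1 l) * (1/27^l)"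
    by (intro tendsto_mult tendsto_const)
  then show "(\<lambda>n. pmf (Y (n + l)) l) \<longlonglongrightarrow> al l" unfolding e al_def by simp
qed

lemma al_partial_le: "sum al {..<N} \<le> 1"
proof (rule LIMSEQ_le_const2)
  show "(\<lambda>n. sum (\<lambda>l. pmf (Y n) l) {..<N}) \<longlonglongrightarrow> sum al {..<N}"
    by (intro tendsto_sum pmf_Y_lim)
  show "\<exists>M. \<forall>n\<ge>M. sum (\<lambda>l. pmf (Y n) l) {..<N} \<le> 1"
    by (intro exI allI impI) (metis finite_lessThan measure_measure_pmf_finite measure_pmf.prob_le_1)
qed

lemma al_summable: "summable al"
  by (rule summableI_nonneg_bounded[OF al_nonneg al_partial_le])

lemma identity:
  "(\<Sum>n\<le>N. bb n) = 1 + (\<Sum>k<N. bb k * sum al {..N-k})"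
proof (induction N)
  case 0
  then show ?case by (simp add: bb_0)
next
  case (Suc N)
  have P: "sum al {..Suc N - k} = sum al {..N-k} + al (Suc N - k)" if "k < Suc N" for k
  proof -
    have "Suc N - k = Suc (N - k)" using that by simp
    then show ?thesis by simp
  qed
  have "(\<Sum>k<Suc N. bb k * sum al {..Suc N-k})
        = (\<Sum>k<Suc N. bb k * sum al {..N-k}) + (\<Sum>k<Suc N. al (Suc N - k) * bb k)"
    by (simp add: P sum.distrib algebra_simps)
  also have "(\<Sum>k<Suc N. bb k * sum al {..N-k}) = (\<Sum>k<N. bb k * sum al {..N-k})"
    by (simp add: al_0)
  also have "(\<Sum>k<Suc N. al (Suc N - k) * bb k) = bb (Suc N)"
    using renewal[of "Suc N"] by simp
  finally show ?case using Suc.IH by simp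
qed

lemma al_sum: "suminf al = 1"
proof (rule antisym)
  show "suminf al \<le> 1" by (rule suminf_le_const[OF al_summable al_partial_le])
  show "1 \<le> suminf al"
  proof (rule ccontr)
    assume "\<not> 1 \<le> suminf al"
    then have A: "suminf al < 1" by simp
    have T: "(\<Sum>n\<le>N. bb n) \<le> 1 / (1 - suminf al)" for N
    proof -
      have "(\<Sum>k<N. bb k * sum al {..N-k}) \<le> (\<Sum>k<N. bb k * suminf al)"
        by (intro sum_mono mult_left_mono sum_le_suminf al_summable bb_nonneg) (auto simp: al_nonneg)
      also have "\<dots> \<le> (\<Sum>k\<le>N. bb k) * suminf al"
        by (simp add: sum_distrib_right[symmetric]) (intro mult_right_mono sum_mono2 suminf_nonneg al_summable al_nonneg bb_nonneg; auto)
      finally have "(\<Sum>n\<le>N. bb n) \<le> 1 + (\<Sum>k\<le>N. bb k) * suminf al"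
        using identity[of N] by simp
      then have "(\<Sum>n\<le>N. bb n) * (1 - suminf al) \<le> 1" by (simp add: algebra_simps)
      then show ?thesis using A by (simp add: field_simps)
    qed
    have "summable bb"
    proof (rule summableI_nonneg_bounded[OF bb_nonneg])
      fix n
      have "sum bb {..<n} \<le> sum bb {..n}" by (intro sum_mono2 bb_nonneg) auto
      then show "sum bb {..<n} \<le> 1 / (1 - suminf al)" using T[of n] by linarith
    qed
    then show False using bb_not_summable by blast
  qed
qed

definition XX :: "nat pmf" where "XX = embed_pmf al"

lemma pmf_XX: "pmf XX l = al l"
proof -
  have "(\<integral>\<^sup>+x. ennreal (al x) \<partial>count_space UNIV) = 1"
    by (simp add: nn_integral_count_space_nat suminf_ennreal2 al_nonneg al_summable al_sum)
  then show ?thesis unfolding XX_def by (intro pmf_embed_pmf al_nonneg)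
qed

lemma weak_part:
  "weak_conv_m (\<lambda>n. measure_pmf (map_pmf (\<lambda>k. real (Suc n - k)) (X_dist (Suc n))))
               (measure_pmf (map_pmf real XX))"
  unfolding weak_conv_m_def weak_conv_def cdf_def
proof (intro allI impI)
  fix x :: real
  have e: "map_pmf (\<lambda>k. real (Suc n - k)) (X_dist (Suc n)) = map_pmf real (Y n)" for n
    unfolding X_dist_def Y_def by (simp add: map_pmf_comp)
  define F where "F = {l::nat. real l \<le> x}"
  have bd: "l \<le> nat \<lceil>x\<rceil>" if "real l \<le> x" for l
  proof -
    have "real l \<le> real (nat \<lceil>x\<rceil>)" using that real_nat_ceiling_ge[of x] by linarith
    then show ?thesis by simp
  qed
  have fin: "finite F" unfolding F_def
    by (rule finite_subset[of _ "{..nat \<lceil>x\<rceil>}"]) (use bd in auto)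
  have m: "measure (measure_pmf (map_pmf real Z)) {..x} = sum (pmf Z) F" for Z
    using measure_measure_pmf_finite[OF fin, of Z] unfolding F_def by (simp add: vimage_def)
  show "(\<lambda>n. measure (measure_pmf (map_pmf (\<lambda>k. real (Suc n - k)) (X_dist (Suc n)))) {..x})
        \<longlonglongrightarrow> measure (measure_pmf (map_pmf real XX)) {..x}"
    unfolding e m pmf_XX by (intro tendsto_sum pmf_Y_lim)
qed

theorem proposition3p5:
  shows "(\<forall>n k. 1 \<le> n \<and> k \<le> n - 1 \<longrightarrow>
            measure_pmf.prob (pmf_of_set (lattice_paths n)) {p. first_visit n p = k}
              = real (a1 (n - k)) * multinom3 k / multinom3 n)
       \<and> (\<exists>X :: nat pmf. (\<forall>l. pmf X l = real (a1 l) / 3 ^ (3 * l)) \<and>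
            weak_conv_m (\<lambda>n. measure_pmf (map_pmf (\<lambda>k. real (Suc n - k)) (X_dist (Suc n))))
                        (measure_pmf (map_pmf real X)))"
proof -
  have P1: "\<forall>n k. 1 \<le> n \<and> k \<le> n - 1 \<longrightarrow>
            measure_pmf.prob (pmf_of_set (lattice_paths n)) {p. first_visit n p = k}
              = real (a1 (n - k)) * multinom3 k / multinom3 n"
    using prob_formula by blast
  have P2: "\<forall>l. pmf XX l = real (a1 l) / 3 ^ (3 * l)"
    unfolding pmf_XX al_def by (simp add: power_mult)
  show ?thesis using P1 P2 weak_part by blast
qed

end
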